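(* Let $\Pi$ be a 2-dimensional real vector space with a fixed nonzero constant area form $\Omega\in\Lambda^2\Pi^*$, and let $\nabla$ be a torsion-free connection with skew-symmetric Ricci tensor on a nonempty connected open set $U\subset\Pi$ which is invariant under the infinitesimal action of $\mathrm{SL}(\Pi)$ (i.e. for every $A\in\mathfrak{sl}(\Pi)$, the vector field $y\mapsto Ay$ on $U$ is an infinitesimal affine transformation of $\nabla$). Then there exists $c\in\mathbb{R}$ such that $\nabla_u v=2c[\Omega(w,u)v+\Omega(w,v)u]-c^2\Omega(w,u)\Omega(w,v)w$ for all vector fields $u$ and all constant vector fields $v$ on $U$, where $w$ denotes the radial (identity) vector field on $\Pi$.
   Context: All objects are $C^\infty$. An infinitesimal affine transformation of a connection is a vector field whose local flows preserve the connection. *)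

theory Defs
  imports "HOL-Analysis.Analysis"
begin

fun Ck :: "nat \<Rightarrow> 'a::euclidean_space set \<Rightarrow> ('a \<Rightarrow> 'b::real_normed_vector) \<Rightarrow> bool" where
  "Ck 0 U f = continuous_on U f"
| "Ck (Suc k) U f = (\<exists>f'. (\<forall>p\<in>U. (f has_derivative f' p) (at p)) \<and> (\<forall>v. Ck k U (\<lambda>p. f' p v)))"

definition smooth_on :: "'a::euclidean_space set \<Rightarrow> ('a \<Rightarrow> 'b::real_normed_vector) \<Rightarrow> bool" where
  "smooth_on U f \<longleftrightarrow> (\<forall>k. Ck k U f)"

definition dd :: "('a::real_normed_vector \<Rightarrow> 'b::real_normed_vector) \<Rightarrow> 'a \<Rightarrow> 'a \<Rightarrow> 'b" where
  "dd f p x = frechet_derivative f (at p) x"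

text \<open>A connection on an open set U of the vector space, given by its
  Christoffel symbols Gamma: nabla_u v (p) = Dv(p)(u p) + Gamma p (u p) (v p).
  Gamma p is bilinear, and Gamma depends smoothly on p.\<close>
definition is_connection :: "'a::euclidean_space set \<Rightarrow> ('a \<Rightarrow> 'a \<Rightarrow> 'a \<Rightarrow> 'a) \<Rightarrow> bool" where
  "is_connection U \<Gamma> \<longleftrightarrow> (\<forall>p\<in>U. bilinear (\<Gamma> p)) \<and> (\<forall>x y. smooth_on U (\<lambda>p. \<Gamma> p x y))"

definition cov :: "('a::euclidean_space \<Rightarrow> 'a \<Rightarrow> 'a \<Rightarrow> 'a) \<Rightarrow> ('a \<Rightarrow> 'a) \<Rightarrow> ('a \<Rightarrow> 'a) \<Rightarrow> 'a \<Rightarrow> 'a" where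
  "cov \<Gamma> u v p = dd v p (u p) + \<Gamma> p (u p) (v p)"

definition torsion_free :: "'a::euclidean_space set \<Rightarrow> ('a \<Rightarrow> 'a \<Rightarrow> 'a \<Rightarrow> 'a) \<Rightarrow> bool" where
  "torsion_free U \<Gamma> \<longleftrightarrow> (\<forall>p\<in>U. \<forall>x y. \<Gamma> p x y = \<Gamma> p y x)"

text \<open>Curvature R(x,y)z = nabla_x nabla_y z - nabla_y nabla_x z - nabla_[x,y] z,
  evaluated on constant vector fields x y z (which span every tangent space).\<close>
definition curv :: "('a::euclidean_space \<Rightarrow> 'a \<Rightarrow> 'a \<Rightarrow> 'a) \<Rightarrow> 'a \<Rightarrow> 'a \<Rightarrow> 'a \<Rightarrow> 'a \<Rightarrow> 'a" where
  "curv \<Gamma> p x y z = dd (\<lambda>q. \<Gamma> q y z) p x - dd (\<lambda>q. \<Gamma> q x z) p y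
     + \<Gamma> p x (\<Gamma> p y z) - \<Gamma> p y (\<Gamma> p x z)"

definition ricci :: "('a::euclidean_space \<Rightarrow> 'a \<Rightarrow> 'a \<Rightarrow> 'a) \<Rightarrow> 'a \<Rightarrow> 'a \<Rightarrow> 'a \<Rightarrow> real" where
  "ricci \<Gamma> p y z = (\<Sum>b\<in>Basis. curv \<Gamma> p b y z \<bullet> b)"

definition lin_trace :: "('a::euclidean_space \<Rightarrow> 'a) \<Rightarrow> real" where
  "lin_trace A = (\<Sum>b\<in>Basis. A b \<bullet> b)"

definition lin_flow :: "('a::euclidean_space \<Rightarrow> 'a) \<Rightarrow> real \<Rightarrow> 'a \<Rightarrow> 'a" where
  "lin_flow A t y = (\<Sum>n. (t ^ n / fact n) *\<^sub>R (A ^^ n) y)"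

text \<open>For the linear map phi_t = exp(tA),
  preserving nabla means Gamma(phi_t q)(phi_t x, phi_t y) = phi_t (Gamma q x y).\<close>
definition lin_inf_affine :: "'a::euclidean_space set \<Rightarrow> ('a \<Rightarrow> 'a \<Rightarrow> 'a \<Rightarrow> 'a) \<Rightarrow> ('a \<Rightarrow> 'a) \<Rightarrow> bool" where
  "lin_inf_affine U \<Gamma> A \<longleftrightarrow>
     (\<forall>p\<in>U. \<exists>V e. open V \<and> p \<in> V \<and> V \<subseteq> U \<and> e > 0 \<and>
        (\<forall>t q. \<bar>t\<bar> < e \<and> q \<in> V \<longrightarrow>
           lin_flow A t q \<in> U \<and>
           (\<forall>x y. \<Gamma> (lin_flow A t q) (lin_flow A t x) (lin_flow A t y)
                  = lin_flow A t (\<Gamma> q x y))))"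

end

theory Submission imports Defs begin

locale om2 =
  fixes \<Omega> :: "'a::euclidean_space \<Rightarrow> 'a \<Rightarrow> real"
  assumes dim: "DIM('a) = 2"
    and bil: "bilinear \<Omega>"
    and alt: "\<And>x. \<Omega> x x = 0"
    and nz: "\<exists>x y. \<Omega> x y \<noteq> 0"
begin

lemma ladd[simp]: "\<Omega> (x + y) z = \<Omega> x z + \<Omega> y z"
  using bil by (simp add: bilinear_ladd)
lemma radd[simp]: "\<Omega> z (x + y) = \<Omega> z x + \<Omega> z y"
  using bil by (simp add: bilinear_radd)
lemma lsc[simp]: "\<Omega> (c *\<^sub>R x) z = c * \<Omega> x z"
  using bil by (simp add: bilinear_lmul)
lemma rsc[simp]: "\<Omega> z (c *\<^sub>R x) = c * \<Omega> z x"
  using bil by (simp add: bilinear_rmul)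
lemma lsub[simp]: "\<Omega> (x - y) z = \<Omega> x z - \<Omega> y z"
  using bil by (simp add: bilinear_lsub)
lemma rsub[simp]: "\<Omega> z (x - y) = \<Omega> z x - \<Omega> z y"
  using bil by (simp add: bilinear_rsub)
lemma lneg[simp]: "\<Omega> (- x) z = - \<Omega> x z"
  using bil by (simp add: bilinear_lneg)
lemma rneg[simp]: "\<Omega> z (- x) = - \<Omega> z x"
  using bil by (simp add: bilinear_rneg)
lemma l0[simp]: "\<Omega> 0 z = 0"
  using bil by (simp add: bilinear_lzero)
lemma r0[simp]: "\<Omega> z 0 = 0"
  using bil by (simp add: bilinear_rzero)
lemma alt'[simp]: "\<Omega> x x = 0" by (rule alt)

lemma skew: "\<Omega> y x = - \<Omega> x y"
proof -
  have "\<Omega> (x+y) (x+y) = \<Omega> x x + \<Omega> x y + (\<Omega> y x + \<Omega> y y)" by (simp del: alt')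
  then show ?thesis using alt[of "x+y"] alt[of x] alt[of y] by linarith
qed

lemma rep:
  assumes pw: "\<Omega> p w = 1"
  shows "x = \<Omega> x w *\<^sub>R p + \<Omega> p x *\<^sub>R w"
proof -
  have w0: "w \<noteq> 0" using pw by auto
  have pnot: "p \<notin> span {w}"
  proof
    assume "p \<in> span {w}"
    then obtain k where "p = k *\<^sub>R w" by (auto simp: span_singleton)
    with pw show False by simp
  qed
  have pw_ne: "p \<noteq> w" using pw by auto
  have ind: "independent {p, w}"
    using pnot w0 by (simp add: independent_insert)
  have "UNIV \<subseteq> span {p, w}"
    using card_eq_dim[of "{p,w}" UNIV] ind pw_ne dim by simp
  then have "x \<in> span {p, w}" by auto
  then obtain k where "x - k *\<^sub>R p \<in> span {w}" by (auto simp: span_breakdown_eq)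
  then obtain m where m: "x - k *\<^sub>R p = m *\<^sub>R w" by (auto simp: span_singleton)
  then have x: "x = k *\<^sub>R p + m *\<^sub>R w" by (simp add: algebra_simps)
  have "\<Omega> x w = k" "\<Omega> p x = m" using pw by (simp_all add: x skew[of w p])
  then show ?thesis using x pw by simp
qed

lemma nondeg:
  assumes "p \<noteq> 0" shows "\<exists>w. \<Omega> p w = 1"
proof -
  obtain x0 y0 where n: "\<Omega> x0 y0 \<noteq> 0" using nz by auto
  define y1 where "y1 = (1 / \<Omega> x0 y0) *\<^sub>R y0"
  have 1: "\<Omega> x0 y1 = 1" using n by (simp add: y1_def)
  have r: "p = \<Omega> p y1 *\<^sub>R x0 + \<Omega> x0 p *\<^sub>R y1" by (rule rep[OF 1])
  show ?thesis
  proof (cases "\<Omega> p y1 = 0")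
    case True
    then have "\<Omega> x0 p \<noteq> 0" using r assms by auto
    then have "\<Omega> p x0 \<noteq> 0" using skew[of p x0] by simp
    then show ?thesis by (intro exI[of _ "(1 / \<Omega> p x0) *\<^sub>R x0"]) simp
  next
    case False
    then show ?thesis by (intro exI[of _ "(1 / \<Omega> p y1) *\<^sub>R y1"]) simp
  qed
qed

lemma sum_lin:
  assumes "linear f"
  shows "(\<Sum>b\<in>Basis. f b * (c \<bullet> b)) = f c"
proof -
  have "f c = f (\<Sum>b\<in>Basis. (c \<bullet> b) *\<^sub>R b)" by (simp add: euclidean_representation)
  also have "\<dots> = (\<Sum>b\<in>Basis. (c \<bullet> b) * f b)"
    using assms by (simp add: linear_sum linear_scale o_def)
  finally show ?thesis by (simp add: mult.commute)
qed

lemma lin_l: "linear (\<lambda>x. \<Omega> x z)" using bil by (simp add: bilinear_def)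
lemma lin_r: "linear (\<lambda>x. \<Omega> z x)" using bil by (simp add: bilinear_def)

lemma trace_nil: "lin_trace (\<lambda>x. \<Omega> v x *\<^sub>R v) = 0"
  unfolding lin_trace_def using sum_lin[OF lin_r, of v v] by simp

lemma linear_nil: "linear (\<lambda>x. \<Omega> v x *\<^sub>R v)"
  by (rule linearI) (simp_all add: algebra_simps)

lemma flow_nil: "lin_flow (\<lambda>x. \<Omega> v x *\<^sub>R v) t y = y + (t * \<Omega> v y) *\<^sub>R v"
proof -
  define A where "A = (\<lambda>x. \<Omega> v x *\<^sub>R v)"
  have AA: "A (A z) = 0" for z by (simp add: A_def)
  have A0: "(A ^^ n) 0 = 0" for n by (induction n) (simp_all add: A_def)
  have hi: "(A ^^ n) y = 0" if "n \<ge> 2" for n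
  proof -
    obtain m where n: "n = m + 2" using \<open>n \<ge> 2\<close> le_Suc_ex by (metis add.commute)
    have "(A ^^ n) y = (A ^^ m) ((A ^^ 2) y)" by (simp only: n funpow_add o_apply)
    also have "(A ^^ 2) y = 0" by (simp add: numeral_2_eq_2 AA)
    finally show ?thesis by (simp add: A0)
  qed
  have "lin_flow A t y = (\<Sum>n\<in>{0,1}. (t ^ n / fact n) *\<^sub>R (A ^^ n) y)"
    unfolding lin_flow_def
    by (rule suminf_finite) (auto simp: hi)
  also have "\<dots> = y + (t * \<Omega> v y) *\<^sub>R v" by (simp add: A_def)
  finally show ?thesis by (simp add: A_def)
qed

definition Gf :: "real \<Rightarrow> real \<Rightarrow> 'a \<Rightarrow> 'a \<Rightarrow> 'a \<Rightarrow> 'a" where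
  "Gf a b p x y = a *\<^sub>R (\<Omega> p x *\<^sub>R y + \<Omega> p y *\<^sub>R x) + (b * \<Omega> p x * \<Omega> p y) *\<^sub>R p"

lemma stab:
  assumes bG: "bilinear G" and e: "e > 0"
    and inv: "\<And>t x y. \<bar>t\<bar> < e \<Longrightarrow>
       G (x + (t * \<Omega> v x) *\<^sub>R v) (y + (t * \<Omega> v y) *\<^sub>R v) = G x y + (t * \<Omega> v (G x y)) *\<^sub>R v"
  shows "(\<Omega> v x * \<Omega> v y) *\<^sub>R G v v = 0"
    and "\<Omega> v y *\<^sub>R G x v + \<Omega> v x *\<^sub>R G v y = \<Omega> v (G x y) *\<^sub>R v"
proof -
  define K where "K = \<Omega> v y *\<^sub>R G x v + \<Omega> v x *\<^sub>R G v y"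
  define Y where "Y = (\<Omega> v x * \<Omega> v y) *\<^sub>R G v v"
  define Z where "Z = \<Omega> v (G x y) *\<^sub>R v"
  have eq: "K + t *\<^sub>R Y = Z" if "\<bar>t\<bar> < e" "t \<noteq> 0" for t
  proof -
    have "G (x + (t * \<Omega> v x) *\<^sub>R v) (y + (t * \<Omega> v y) *\<^sub>R v)
      = G x y + t *\<^sub>R (K + t *\<^sub>R Y)"
      by (simp add: bilinear_ladd[OF bG] bilinear_radd[OF bG] bilinear_lmul[OF bG]
          bilinear_rmul[OF bG] K_def Y_def algebra_simps)
    then have "t *\<^sub>R (K + t *\<^sub>R Y) = t *\<^sub>R Z" using inv[OF that(1), of x y]
      by (simp add: Z_def)
    then show ?thesis using that(2) by simp
  qed
  have 1: "K + (e/2) *\<^sub>R Y = Z" using e by (intro eq) auto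
  have 2: "K + (e/4) *\<^sub>R Y = Z" using e by (intro eq) auto
  have "(e/2 - e/4) *\<^sub>R Y = 0" using 1 2 by (metis add_left_cancel scaleR_left_diff_distrib right_minus_eq)
  then have Y0: "Y = 0" using e by simp
  then show "(\<Omega> v x * \<Omega> v y) *\<^sub>R G v v = 0" by (simp add: Y_def)
  show "\<Omega> v y *\<^sub>R G x v + \<Omega> v x *\<^sub>R G v y = \<Omega> v (G x y) *\<^sub>R v"
    using 1 Y0 by (simp add: K_def Z_def)
qed

lemma form:
  assumes bG: "bilinear G" and sym: "\<And>x y. G x y = G y x" and p: "p \<noteq> 0" and e: "e > 0"
    and inv: "\<And>t x y. \<bar>t\<bar> < e \<Longrightarrow>
       G (x + (t * \<Omega> p x) *\<^sub>R p) (y + (t * \<Omega> p y) *\<^sub>R p) = G x y + (t * \<Omega> p (G x y)) *\<^sub>R p"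
  shows "\<exists>a b. \<forall>x y. G x y = Gf a b p x y"
proof -
  obtain w where pw: "\<Omega> p w = 1" using nondeg[OF p] by auto
  have "(\<Omega> p w * \<Omega> p w) *\<^sub>R G p p = 0" by (rule stab(1)[OF bG e inv])
  then have Gpp: "G p p = 0" using pw by simp
  have "\<Omega> p w *\<^sub>R G w p + \<Omega> p w *\<^sub>R G p w = \<Omega> p (G w w) *\<^sub>R p" by (rule stab(2)[OF bG e inv])
  then have "2 *\<^sub>R G p w = \<Omega> p (G w w) *\<^sub>R p" using pw sym[of w p] by (simp add: scaleR_2)
  then have Gpw: "G p w = (\<Omega> p (G w w) / 2) *\<^sub>R p"
    by (metis (no_types, lifting) divide_inverse_commute mult.commute scaleR_scaleR scaleR_2 
        real_vector.scale_left_commute zero_neq_numeral scaleR_one divide_self_if mult_1 )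
  define a where "a = \<Omega> p (G w w) / 2"
  define b where "b = \<Omega> (G w w) w"
  have Gww: "G w w = b *\<^sub>R p + (2 * a) *\<^sub>R w"
    using rep[OF pw, of "G w w"] by (simp add: a_def b_def)
  have Gwp: "G w p = a *\<^sub>R p" using Gpw sym[of w p] by (simp add: a_def)
  have Gpw': "G p w = a *\<^sub>R p" using Gpw by (simp add: a_def)
  show ?thesis
  proof (intro exI allI)
    fix x y
    let ?x1 = "\<Omega> x w" and ?x2 = "\<Omega> p x" and ?y1 = "\<Omega> y w" and ?y2 = "\<Omega> p y"
    have "G x y = G (?x1 *\<^sub>R p + ?x2 *\<^sub>R w) (?y1 *\<^sub>R p + ?y2 *\<^sub>R w)"
      using rep[OF pw, of x] rep[OF pw, of y] by simp
    also have "\<dots> = (?x1 * ?y2 * a + ?x2 * ?y1 * a + ?x2 * ?y2 * b) *\<^sub>R p + (?x2 * ?y2 * 2 * a) *\<^sub>R w"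
      by (simp add: bilinear_ladd[OF bG] bilinear_radd[OF bG] bilinear_lmul[OF bG]
          bilinear_rmul[OF bG] Gpp Gwp Gpw' Gww algebra_simps)
    also have "\<dots> = Gf a b p (?x1 *\<^sub>R p + ?x2 *\<^sub>R w) (?y1 *\<^sub>R p + ?y2 *\<^sub>R w)"
      apply (simp add: Gf_def pw algebra_simps)
      by (simp only: mult_2 distrib_left distrib_right scaleR_add_left)
    also have "\<dots> = Gf a b p x y" using rep[OF pw, of x] rep[OF pw, of y] by simp
    finally show "G x y = Gf a b p x y" .
  qed
qed

lemma Gf_unique:
  assumes p: "p \<noteq> 0" and eq: "\<And>x y. Gf a b p x y = Gf a' b' p x y"
  shows "a = a' \<and> b = b'"
proof -
  obtain w where pw: "\<Omega> p w = 1" using nondeg[OF p] by auto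
  have e: "Gf a b p w w = Gf a' b' p w w" by (rule eq)
  have "\<Omega> p (Gf a b p w w) = 2 * a" "\<Omega> p (Gf a' b' p w w) = 2 * a'"
    by (simp_all add: Gf_def pw)
  with e have "a = a'" by simp
  moreover have "\<Omega> (Gf a b p w w) w = b" "\<Omega> (Gf a' b' p w w) w = b'"
    by (simp_all add: Gf_def pw skew[of w p])
  with e have "b = b'" by simp
  ultimately show ?thesis ..
qed

lemma zero_form:
  assumes bG: "bilinear G" and sym: "\<And>x y. G x y = G y x"
    and inv: "\<And>v. \<exists>e>0. \<forall>t x y. \<bar>t\<bar> < e \<longrightarrow>
       G (x + (t * \<Omega> v x) *\<^sub>R v) (y + (t * \<Omega> v y) *\<^sub>R v) = G x y + (t * \<Omega> v (G x y)) *\<^sub>R v"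
  shows "G x y = 0"
proof -
  have diag: "G v v = 0" for v
  proof (cases "v = 0")
    case True then show ?thesis using bG by (simp add: bilinear_lzero)
  next
    case False
    obtain w where vw: "\<Omega> v w = 1" using nondeg[OF False] by auto
    obtain e where "e > 0" and i: "\<forall>t x y. \<bar>t\<bar> < e \<longrightarrow>
       G (x + (t * \<Omega> v x) *\<^sub>R v) (y + (t * \<Omega> v y) *\<^sub>R v) = G x y + (t * \<Omega> v (G x y)) *\<^sub>R v"
      using inv[of v] by auto
    have "(\<Omega> v w * \<Omega> v w) *\<^sub>R G v v = 0" by (rule stab(1)[OF bG \<open>e>0\<close>]) (use i in auto)
    then show ?thesis using vw by simp
  qed
  have "G (x+y) (x+y) = G x x + G x y + (G y x + G y y)"
    by (simp add: bilinear_ladd[OF bG] bilinear_radd[OF bG])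
  then have "G x y + G y x = 0" using diag[of "x+y"] diag[of x] diag[of y] by simp
  then have "2 *\<^sub>R G x y = 0" using sym[of y x] by (simp add: scaleR_2)
  then show ?thesis by simp
qed

lemma flow_omega: "\<Omega> (x + (t * \<Omega> v x) *\<^sub>R v) (y + (t * \<Omega> v y) *\<^sub>R v) = \<Omega> x y"
  by (simp add: skew[of v x] algebra_simps)

lemma Gf_flow:
  "Gf a b (q + (t * \<Omega> v q) *\<^sub>R v) (x + (t * \<Omega> v x) *\<^sub>R v) (y + (t * \<Omega> v y) *\<^sub>R v)
   = Gf a b q x y + (t * \<Omega> v (Gf a b q x y)) *\<^sub>R v"
  unfolding Gf_def flow_omega by (simp add: algebra_simps)

end

locale gsetup = om2 \<Omega> for \<Omega> :: "'a::euclidean_space \<Rightarrow> 'a \<Rightarrow> real" +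
  fixes U :: "'a set" and \<Gamma> :: "'a \<Rightarrow> 'a \<Rightarrow> 'a \<Rightarrow> 'a"
  assumes U_open: "open U" and U_conn: "connected U" and U_ne: "U \<noteq> {}"
    and conn: "is_connection U \<Gamma>"
    and tf: "torsion_free U \<Gamma>"
    and ric_skew: "\<And>p y z. p \<in> U \<Longrightarrow> ricci \<Gamma> p y z = - ricci \<Gamma> p z y"
    and inv: "\<And>A. linear A \<Longrightarrow> lin_trace A = 0 \<Longrightarrow> lin_inf_affine U \<Gamma> A"
begin

abbreviation g :: "'a \<Rightarrow> real \<Rightarrow> 'a \<Rightarrow> 'a" where
  "g v t x \<equiv> x + (t * \<Omega> v x) *\<^sub>R v"

lemma bG: "p \<in> U \<Longrightarrow> bilinear (\<Gamma> p)" using conn by (simp add: is_connection_def)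
lemma symG: "p \<in> U \<Longrightarrow> \<Gamma> p x y = \<Gamma> p y x" using tf by (simp add: torsion_free_def)

lemma flowinv:
  assumes "p \<in> U"
  shows "\<exists>V e. open V \<and> p \<in> V \<and> V \<subseteq> U \<and> e > 0 \<and>
        (\<forall>t q. \<bar>t\<bar> < e \<and> q \<in> V \<longrightarrow> g v t q \<in> U \<and>
           (\<forall>x y. \<Gamma> (g v t q) (g v t x) (g v t y) = g v t (\<Gamma> q x y)))"
  using inv[OF linear_nil trace_nil, of v] assms
  unfolding lin_inf_affine_def flow_nil by blast

lemma g_ne0: "q \<noteq> 0 \<Longrightarrow> g v t q \<noteq> 0"
proof
  assume q: "q \<noteq> 0" and z: "g v t q = 0"
  have "\<Omega> v (g v t q) = \<Omega> v q" by simp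
  then have "\<Omega> v q = 0" using z by simp
  then show False using z q by simp
qed

lemma g_inv: "g v t (g v (-t) x) = x"
  by (simp add: algebra_simps)

lemma has_form: "p \<in> U \<Longrightarrow> p \<noteq> 0 \<Longrightarrow> \<exists>a b. \<forall>x y. \<Gamma> p x y = Gf a b p x y"
proof -
  assume p: "p \<in> U" "p \<noteq> 0"
  obtain V e where V: "p \<in> V" "e > 0" and
    fl: "\<forall>t q. \<bar>t\<bar> < e \<and> q \<in> V \<longrightarrow> g p t q \<in> U \<and> (\<forall>x y. \<Gamma> (g p t q) (g p t x) (g p t y) = g p t (\<Gamma> q x y))"
    using flowinv[OF p(1), of p] by (elim exE conjE) (rule that)
  show ?thesis
  proof (rule form[OF bG[OF p(1)] symG[OF p(1)] p(2) V(2)])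
    fix t x y assume "\<bar>t\<bar> < e"
    then show "\<Gamma> p (g p t x) (g p t y) = g p t (\<Gamma> p x y)"
    proof -
      have gp: "g p t p = p" by simp
      have "\<Gamma> (g p t p) (g p t x) (g p t y) = g p t (\<Gamma> p x y)" using fl[rule_format, of t p] V(1) \<open>\<bar>t\<bar> < e\<close> by simp
      then show ?thesis by (simp only: gp)
    qed
  qed
qed

definition ab :: "'a \<Rightarrow> real \<times> real" where
  "ab p = (SOME ab. \<forall>x y. \<Gamma> p x y = Gf (fst ab) (snd ab) p x y)"

lemma ab_form: "p \<in> U \<Longrightarrow> p \<noteq> 0 \<Longrightarrow> \<Gamma> p x y = Gf (fst (ab p)) (snd (ab p)) p x y"
proof -
  assume p: "p \<in> U" "p \<noteq> 0"
  obtain a b where "\<forall>x y. \<Gamma> p x y = Gf a b p x y" using has_form[OF p] by blast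
  then have "\<exists>ab. \<forall>x y. \<Gamma> p x y = Gf (fst ab) (snd ab) p x y" by (intro exI[of _ "(a,b)"]) simp
  then have "\<forall>x y. \<Gamma> p x y = Gf (fst (ab p)) (snd (ab p)) p x y" unfolding ab_def by (rule someI_ex)
  then show ?thesis by blast
qed

lemma ab_step:
  assumes q: "q \<in> U" "q \<noteq> 0" and gq: "g v t q \<in> U"
    and fl: "\<forall>x y. \<Gamma> (g v t q) (g v t x) (g v t y) = g v t (\<Gamma> q x y)"
  shows "ab (g v t q) = ab q"
proof -
  have gq0: "g v t q \<noteq> 0" using g_ne0[OF q(2)] .
  have "Gf (fst (ab (g v t q))) (snd (ab (g v t q))) (g v t q) x' y'
      = Gf (fst (ab q)) (snd (ab q)) (g v t q) x' y'" for x' y'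
  proof -
    let ?x = "g v (-t) x'" and ?y = "g v (-t) y'"
    have "Gf (fst (ab (g v t q))) (snd (ab (g v t q))) (g v t q) x' y'
        = \<Gamma> (g v t q) (g v t ?x) (g v t ?y)"
      by (simp only: ab_form[OF gq gq0] g_inv)
    also have "\<dots> = g v t (\<Gamma> q ?x ?y)" using fl by blast
    also have "\<dots> = Gf (fst (ab q)) (snd (ab q)) (g v t q) (g v t ?x) (g v t ?y)"
      by (simp only: ab_form[OF q] Gf_flow)
    also have "\<dots> = Gf (fst (ab q)) (snd (ab q)) (g v t q) x' y'" by (simp only: g_inv)
    finally show ?thesis .
  qed
  from Gf_unique[OF gq0 this] show ?thesis by (simp add: prod_eq_iff)
qed

lemma ab_loc:
  assumes p: "p \<in> U" "p \<noteq> 0"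
  shows "eventually (\<lambda>q'. ab p = ab q') (at p within (U - {0}))"
proof -
  obtain w where pw: "\<Omega> p w = 1" using nondeg[OF p(2)] by auto
  define v1 where "v1 = p + w"
  obtain V1 e1 where V1: "p \<in> V1" "e1 > 0" and
    fl1: "\<forall>t q. \<bar>t\<bar> < e1 \<and> q \<in> V1 \<longrightarrow> g v1 t q \<in> U \<and> (\<forall>x y. \<Gamma> (g v1 t q) (g v1 t x) (g v1 t y) = g v1 t (\<Gamma> q x y))"
    using flowinv[OF p(1), of v1] by (elim exE conjE) (rule that)
  obtain V2 e2 where V2: "open V2" "p \<in> V2" "e2 > 0" and
    fl2: "\<forall>t q. \<bar>t\<bar> < e2 \<and> q \<in> V2 \<longrightarrow> g w t q \<in> U \<and> (\<forall>x y. \<Gamma> (g w t q) (g w t x) (g w t y) = g w t (\<Gamma> q x y))"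
    using flowinv[OF p(1), of w] by (elim exE conjE) (rule that)
  define F where "F = at p within (U - {0})"
  define A where "A q' = \<Omega> q' w - 1" for q'
  define B where "B q' = \<Omega> p q'" for q'
  define S where "S q' = (A q' - B q') / (1 + A q')" for q'
  define P' where "P' q' = p + A q' *\<^sub>R (p + w)" for q'
  have bb: "bounded_bilinear \<Omega>" using bil bilinear_conv_bounded_bilinear by blast
  have "((\<lambda>q'. \<Omega> q' w) \<longlongrightarrow> \<Omega> p w) F"
    unfolding F_def by (rule bounded_bilinear.tendsto[OF bb tendsto_ident_at tendsto_const])
  then have "((\<lambda>q'. \<Omega> q' w - 1) \<longlongrightarrow> \<Omega> p w - 1) F" by (intro tendsto_diff tendsto_const)
  then have tA: "(A \<longlongrightarrow> 0) F" unfolding A_def using pw by simp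
  have "((\<lambda>q'. \<Omega> p q') \<longlongrightarrow> \<Omega> p p) F"
    unfolding F_def by (rule bounded_bilinear.tendsto[OF bb tendsto_const tendsto_ident_at])
  then have tB: "(B \<longlongrightarrow> 0) F" unfolding B_def by simp
  have "((\<lambda>q'. (A q' - B q') / (1 + A q')) \<longlongrightarrow> (0 - 0) / (1 + 0)) F"
    by (intro tendsto_intros tA tB) simp
  then have tS: "(S \<longlongrightarrow> 0) F" unfolding S_def by simp
  have "((\<lambda>q'. p + A q' *\<^sub>R (p + w)) \<longlongrightarrow> p + 0 *\<^sub>R (p + w)) F"
    by (intro tendsto_intros tA)
  then have tP: "(P' \<longlongrightarrow> p) F" unfolding P'_def by simp
  have ev0: "eventually (\<lambda>q'. q' \<in> U - {0}) F"
    unfolding F_def eventually_at_filter by simp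
  have evA: "eventually (\<lambda>q'. dist (A q') 0 < min e1 (1/2)) F"
    by (rule tendstoD[OF tA]) (use V1(2) in simp)
  have evS: "eventually (\<lambda>q'. dist (S q') 0 < e2) F"
    by (rule tendstoD[OF tS]) (use V2(3) in simp)
  have evP: "eventually (\<lambda>q'. P' q' \<in> V2) F"
    by (rule topological_tendstoD[OF tP V2(1,2)])
  have "eventually (\<lambda>q'. ab p = ab q') F"
    using ev0 evA evS evP
  proof eventually_elim
    case (elim q')
    have a1: "\<bar>A q'\<bar> < e1" "\<bar>A q'\<bar> < 1/2" using elim(2) by auto
    have s2: "\<bar>S q'\<bar> < e2" using elim(3) by simp
    have g1: "g v1 (- A q') p = P' q'"
      by (simp add: v1_def P'_def skew[of w p] pw)
    have f1: "g v1 (- A q') p \<in> U \<and> (\<forall>x y. \<Gamma> (g v1 (- A q') p) (g v1 (- A q') x) (g v1 (- A q') y) = g v1 (- A q') (\<Gamma> p x y))"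
      using fl1[THEN spec[of _ "- A q'"], THEN spec[of _ p], THEN mp] a1(1) V1(1) by (simp only: abs_minus_cancel simp_thms)
    have PU: "P' q' \<in> U" using f1 g1 by simp
    have P0: "P' q' \<noteq> 0" using g_ne0[OF p(2), where v=v1 and t="- A q'"] g1 by metis
    have ab1: "ab (P' q') = ab p"
      using ab_step[OF p f1[THEN conjunct1] f1[THEN conjunct2]] g1 by simp
    have f2: "g w (S q') (P' q') \<in> U \<and> (\<forall>x y. \<Gamma> (g w (S q') (P' q')) (g w (S q') x) (g w (S q') y) = g w (S q') (\<Gamma> (P' q') x y))"
      using fl2[THEN spec[of _ "S q'"], THEN spec[of _ "P' q'"], THEN mp] s2 elim(4) by (simp only: simp_thms)
    have ab2: "ab (g w (S q') (P' q')) = ab (P' q')"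
      using ab_step[OF PU P0 f2[THEN conjunct1] f2[THEN conjunct2]] .
    have nz: "1 + A q' \<noteq> 0" using a1(2) by auto
    have SA: "S q' * (1 + A q') = A q' - B q'" using nz by (simp add: S_def)
    have om: "\<Omega> w (P' q') = - (1 + A q')" by (simp add: P'_def skew[of w p] algebra_simps pw)
    have "g w (S q') (P' q') = P' q' + (S q' * (- (1 + A q'))) *\<^sub>R w" by (simp only: om)
    also have "\<dots> = P' q' - (S q' * (1 + A q')) *\<^sub>R w" by (simp only: mult_minus_right scaleR_minus_left diff_conv_add_uminus)
    also have "\<dots> = p + A q' *\<^sub>R p + A q' *\<^sub>R w - (S q' * (1 + A q')) *\<^sub>R w"
      by (simp add: P'_def algebra_simps)
    also have "\<dots> = (1 + A q') *\<^sub>R p + B q' *\<^sub>R w" by (simp only: SA) (simp add: algebra_simps)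
    also have "\<dots> = q'" using rep[OF pw, of q'] by (simp add: A_def B_def)
    finally have "g w (S q') (P' q') = q'" .
    then show "ab p = ab q'" using ab1 ab2 by simp
  qed
  then show ?thesis by (simp add: F_def)
qed

lemma ab_const: "\<exists>c. \<forall>p\<in>U - {0}. ab p = c"
proof (cases "U - {0} = {}")
  case True then show ?thesis by (intro exI[of _ "ab 0"]) auto
next
  case False
  then obtain p0 where p0: "p0 \<in> U - {0}" by blast
  have d2: "2 \<le> DIM('a)" using dim by simp
  have cn: "connected (U - {0})" by (rule connected_open_delete[OF U_open U_conn d2])
  have "ab p0 = ab p" if "p \<in> U - {0}" for p
    by (rule connected_local_const[OF cn p0 that]) (use ab_loc in blast)
  then show ?thesis by (intro exI[of _ "ab p0"]) auto
qed

lemma U_ne0: "U - {0} \<noteq> {}"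
proof
  assume "U - {0} = {}"
  then have "U = {0}" using U_ne by blast
  then show False using U_open not_open_singleton[of "0::'a"] by simp
qed

lemma Gamma0:
  assumes U0: "0 \<in> U" shows "\<Gamma> 0 x y = 0"
proof (rule zero_form[OF bG[OF U0] symG[OF U0]])
  fix v
  obtain V e where V: "0 \<in> V" "e > 0" and
    fl: "\<forall>t q. \<bar>t\<bar> < e \<and> q \<in> V \<longrightarrow> g v t q \<in> U \<and> (\<forall>x y. \<Gamma> (g v t q) (g v t x) (g v t y) = g v t (\<Gamma> q x y))"
    using flowinv[OF U0, of v] by (elim exE conjE) (rule that)
  show "\<exists>e>0. \<forall>t x y. \<bar>t\<bar> < e \<longrightarrow> \<Gamma> 0 (g v t x) (g v t y) = g v t (\<Gamma> 0 x y)"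
  proof (intro exI conjI allI impI)
    fix t x y assume "\<bar>t\<bar> < e"
    then have "\<Gamma> (g v t 0) (g v t x) (g v t y) = g v t (\<Gamma> 0 x y)"
      using fl[THEN spec[of _ t], THEN spec[of _ 0], THEN mp] V(1) by (simp only: simp_thms)
    then show "\<Gamma> 0 (g v t x) (g v t y) = g v t (\<Gamma> 0 x y)" by simp
  qed (rule V(2))
qed

definition DGf :: "real \<Rightarrow> real \<Rightarrow> 'a \<Rightarrow> 'a \<Rightarrow> 'a \<Rightarrow> 'a \<Rightarrow> 'a" where
  "DGf a b p x y z = a *\<^sub>R (\<Omega> x y *\<^sub>R z + \<Omega> x z *\<^sub>R y)
     + (b * (\<Omega> x y * \<Omega> p z + \<Omega> p y * \<Omega> x z)) *\<^sub>R p + (b * \<Omega> p y * \<Omega> p z) *\<^sub>R x"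

lemma dOm: "((\<lambda>q. \<Omega> q y) has_derivative (\<lambda>x. \<Omega> x y)) F"
proof -
  have bb: "bounded_bilinear \<Omega>" using bil bilinear_conv_bounded_bilinear by blast
  show ?thesis by (rule bounded_linear.has_derivative[OF bounded_bilinear.bounded_linear_left[OF bb] has_derivative_ident])
qed

lemma dGf: "((\<lambda>q. Gf a b q y z) has_derivative (\<lambda>x. DGf a b p x y z)) (at p)"
proof -
  have "((\<lambda>q. a *\<^sub>R (\<Omega> q y *\<^sub>R z + \<Omega> q z *\<^sub>R y) + (b * \<Omega> q y * \<Omega> q z) *\<^sub>R q) has_derivative
     (\<lambda>x. a *\<^sub>R (\<Omega> x y *\<^sub>R z + \<Omega> x z *\<^sub>R y) + 
          ((b * \<Omega> p y * \<Omega> p z) *\<^sub>R x + (b * \<Omega> p y * \<Omega> x z + b * \<Omega> x y * \<Omega> p z) *\<^sub>R p))) (at p)"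
    by (intro derivative_eq_intros) (auto intro: dOm)
  then show ?thesis unfolding Gf_def DGf_def
    by (rule has_derivative_eq_rhs) (simp add: fun_eq_iff algebra_simps)
qed

lemma trace2:
  assumes L: "linear L" and pw: "\<Omega> p w = 1"
  shows "(\<Sum>b\<in>Basis. L b \<bullet> b) = \<Omega> (L p) w + \<Omega> p (L w)"
proof -
  have Lb: "L b = \<Omega> b w *\<^sub>R L p + \<Omega> p b *\<^sub>R L w" for b
  proof -
    have "L b = L (\<Omega> b w *\<^sub>R p + \<Omega> p b *\<^sub>R w)" by (rule arg_cong[where f=L, OF rep[OF pw]])
    also have "\<dots> = \<Omega> b w *\<^sub>R L p + \<Omega> p b *\<^sub>R L w" using L by (simp add: linear_add linear_scale)
    finally show ?thesis .
  qed
  have "(\<Sum>b\<in>Basis. L b \<bullet> b) = (\<Sum>b\<in>Basis. \<Omega> b w * (L p \<bullet> b)) + (\<Sum>b\<in>Basis. \<Omega> p b * (L w \<bullet> b))"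
  proof -
    have "L b \<bullet> b = \<Omega> b w * (L p \<bullet> b) + \<Omega> p b * (L w \<bullet> b)" for b
      unfolding Lb[of b] by (simp add: inner_add_left)
    then show ?thesis by (simp add: sum.distrib)
  qed
  also have "\<dots> = \<Omega> (L p) w + \<Omega> p (L w)"
    using sum_lin[OF lin_l, of w "L p"] sum_lin[OF lin_r, of p "L w"] by simp
  finally show ?thesis .
qed

lemma ric_rel:
  assumes p: "p \<in> U" "p \<noteq> 0" and abc: "\<forall>q\<in>U - {0}. ab q = (a, b)"
  shows "4 * b + a\<^sup>2 = 0"
proof -
  have GF: "\<Gamma> q y z = Gf a b q y z" if "q \<in> U - {0}" for q y z
    using ab_form[of q y z] abc that by simp
  have dd_eq: "dd (\<lambda>q. \<Gamma> q y z) p x = DGf a b p x y z" for x y z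
  proof -
    have "((\<lambda>q. \<Gamma> q y z) has_derivative (\<lambda>x. DGf a b p x y z)) (at p)"
      by (rule has_derivative_transform_within_open[OF dGf open_delete[OF U_open]]) (use p GF in auto)
    then show ?thesis unfolding dd_def using frechet_derivative_at by metis
  qed
  obtain w where pw: "\<Omega> p w = 1" using nondeg[OF p(2)] by auto
  define L where "L x = DGf a b p x w w - DGf a b p w x w + Gf a b p x (Gf a b p w w) - Gf a b p w (Gf a b p x w)" for x
  have cL: "curv \<Gamma> p x w w = L x" for x
    unfolding curv_def L_def dd_eq using GF p by simp
  have l1: "linear (\<lambda>x. DGf a b p x y z)" for y z
    by (rule linearI) (simp_all add: DGf_def algebra_simps)
  have l2: "linear (\<lambda>y. DGf a b p x y z)" for x z
    by (rule linearI) (simp_all add: DGf_def algebra_simps)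
  have l3: "linear (\<lambda>x. Gf a b p x y)" for y
    by (rule linearI) (simp_all add: Gf_def algebra_simps)
  have l4: "linear (\<lambda>y. Gf a b p x y)" for x
    by (rule linearI) (simp_all add: Gf_def algebra_simps)
  have l5: "linear (\<lambda>x. Gf a b p w (Gf a b p x w))"
    using linear_compose[OF l3 l4] by (simp add: o_def)
  have linL: "linear L"
    unfolding L_def
    by (intro linear_compose_add linear_compose_sub l1 l2 l3 l5)
  have "ricci \<Gamma> p w w = (\<Sum>b\<in>Basis. L b \<bullet> b)" unfolding ricci_def cL ..
  also have "\<dots> = \<Omega> (L p) w + \<Omega> p (L w)" by (rule trace2[OF linL pw])
  also have "L w = 0" by (simp add: L_def)
  also have "\<Omega> (L p) w = 4 * b + a\<^sup>2"
  proof -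
    have wp: "\<Omega> w p = -1" using skew[of w p] pw by simp
    have 1: "DGf a b p p w w = a *\<^sub>R (w + w) + (b * (1 + 1)) *\<^sub>R p + (b * 1 * 1) *\<^sub>R p"
      unfolding DGf_def pw by simp
    have 2: "DGf a b p w p w = - (a *\<^sub>R w) - b *\<^sub>R p"
      by (simp add: DGf_def pw wp)
    have 3: "Gf a b p w w = (2*a) *\<^sub>R w + b *\<^sub>R p"
      by (simp add: Gf_def pw scaleR_2[symmetric] algebra_simps)
    have 4: "Gf a b p p ((2*a) *\<^sub>R w + b *\<^sub>R p) = (2*a*a) *\<^sub>R p"
      by (simp add: Gf_def pw)
    have 5: "Gf a b p p w = a *\<^sub>R p"
      by (simp add: Gf_def pw)
    have 6: "Gf a b p w (a *\<^sub>R p) = (a*a) *\<^sub>R p"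
      by (simp add: Gf_def pw)
    have "L p = a *\<^sub>R (w + w) + (b * (1 + 1)) *\<^sub>R p + (b * 1 * 1) *\<^sub>R p - (- (a *\<^sub>R w) - b *\<^sub>R p) + (2*a*a) *\<^sub>R p - (a*a) *\<^sub>R p"
      unfolding L_def 1 2 3 4 5 6 ..
    then show ?thesis by (simp only:) (simp add: pw wp power2_eq_square algebra_simps)
  qed
  finally have "ricci \<Gamma> p w w = 4 * b + a\<^sup>2" by simp
  moreover have "ricci \<Gamma> p w w = 0" using ric_skew[OF p(1), of w w] by simp
  ultimately show ?thesis by simp
qed

end

theorem lemma10p7:
  fixes \<Omega> :: "'a::euclidean_space \<Rightarrow> 'a \<Rightarrow> real"
    and U :: "'a set"
    and \<Gamma> :: "'a \<Rightarrow> 'a \<Rightarrow> 'a \<Rightarrow> 'a"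
  assumes dim: "DIM('a) = 2"
    and \<Omega>_bilin: "bilinear \<Omega>"
    and \<Omega>_alt: "\<And>x. \<Omega> x x = 0"
    and \<Omega>_nz: "\<exists>x y. \<Omega> x y \<noteq> 0"
    and U_open: "open U" and U_conn: "connected U" and U_ne: "U \<noteq> {}"
    and conn: "is_connection U \<Gamma>"
    and tf: "torsion_free U \<Gamma>"
    and ric_skew: "\<And>p y z. p \<in> U \<Longrightarrow> ricci \<Gamma> p y z = - ricci \<Gamma> p z y"
    and inv: "\<And>A. linear A \<Longrightarrow> lin_trace A = 0 \<Longrightarrow> lin_inf_affine U \<Gamma> A"
  shows "\<exists>c::real. \<forall>u v. smooth_on U u \<and> (\<exists>v0. v = (\<lambda>_. v0)) \<longrightarrow>
           (\<forall>p\<in>U. cov \<Gamma> u v p =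
              (2 * c) *\<^sub>R (\<Omega> p (u p) *\<^sub>R v p + \<Omega> p (v p) *\<^sub>R u p)
              - (c\<^sup>2 * \<Omega> p (u p) * \<Omega> p (v p)) *\<^sub>R p)"
proof -
  interpret gsetup \<Omega> U \<Gamma>
    by unfold_locales (rule dim \<Omega>_bilin \<Omega>_alt \<Omega>_nz U_open U_conn U_ne conn tf ric_skew inv | assumption)+
  obtain ab0 where abc: "\<forall>p\<in>U - {0}. ab p = ab0" using ab_const by blast
  define a where "a = fst ab0"
  define b where "b = snd ab0"
  have abc': "\<forall>p\<in>U - {0}. ab p = (a, b)" using abc by (simp add: a_def b_def)
  obtain p0 where p0: "p0 \<in> U - {0}" using U_ne0 by blast
  have rel: "4 * b + a\<^sup>2 = 0" using ric_rel[of p0 a b] p0 abc' by simp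
  define c where "c = a / 2"
  have key: "\<Gamma> p x y = (2 * c) *\<^sub>R (\<Omega> p x *\<^sub>R y + \<Omega> p y *\<^sub>R x) - (c\<^sup>2 * \<Omega> p x * \<Omega> p y) *\<^sub>R p"
    if p: "p \<in> U" for p x y
  proof (cases "p = 0")
    case True then show ?thesis using Gamma0 p by simp
  next
    case False
    have "\<Gamma> p x y = Gf a b p x y" using ab_form[OF p False, of x y] abc' p False by simp
    moreover have "b = - (c\<^sup>2)" using rel by (simp add: c_def power2_eq_square field_simps)
    moreover have "a = 2 * c" by (simp add: c_def)
    ultimately show ?thesis by (simp add: Gf_def)
  qed
  show ?thesis
  proof (intro exI[of _ c] allI impI ballI)
    fix u v :: "'a \<Rightarrow> 'a" and p :: 'a assume h: "smooth_on U u \<and> (\<exists>v0. v = (\<lambda>_. v0))" and p: "p \<in> U"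
    then obtain v0 where v: "v = (\<lambda>_. v0)" by blast
    have fd: "(\<lambda>x. 0) = frechet_derivative (\<lambda>_. v0) (at p)"
      by (rule frechet_derivative_at) simp
    have "dd (\<lambda>_. v0) p (u p) = 0"
      unfolding dd_def using fun_cong[OF fd, of "u p"] by simp
    then show "cov \<Gamma> u v p = (2 * c) *\<^sub>R (\<Omega> p (u p) *\<^sub>R v p + \<Omega> p (v p) *\<^sub>R u p)
              - (c\<^sup>2 * \<Omega> p (u p) * \<Omega> p (v p)) *\<^sub>R p"
      unfolding cov_def v using key[OF p] by simp
  qed
qed

end
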